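(* For every nonnegative integer $k$ and all integers $i,j\geq 2k+3$, we have $R_k^{\mathcal{SP}}(i,j)=i+j-1$, where $\mathcal{SP}$ is the class of split graphs.
   Context: All graphs are finite and simple. For a graph $G$ and a nonnegative integer $k$, a $k$-sparse $j$-set is a set of $j$ vertices of $G$ inducing a subgraph of maximum degree at most $k$; a $k$-dense $i$-set is a set of $i$ vertices of $G$ that is $k$-sparse in the complement of $G$. For a graph class $\mathcal{G}$, $R_k^{\mathcal{G}}(i,j)$ is the smallest natural number $n$ such that every graph on $n$ vertices in $\mathcal{G}$ has either a $k$-dense $i$-set or a $k$-sparse $j$-set. A split graph is a graph whose vertex set can be partitioned into a clique and an independent set. *)

theory Defs
  imports Main
begin

text \<open>A finite simple graph: finite vertex set V with a symmetric irreflexive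
  adjacency relation E (only its restriction to V matters).\<close>
definition simple_graph :: "'a set \<Rightarrow> ('a \<Rightarrow> 'a \<Rightarrow> bool) \<Rightarrow> bool" where
  "simple_graph V E \<longleftrightarrow> finite V \<and> (\<forall>x\<in>V. \<forall>y\<in>V. E x y = E y x) \<and> (\<forall>x\<in>V. \<not> E x x)"

definition compl_graph :: "('a \<Rightarrow> 'a \<Rightarrow> bool) \<Rightarrow> 'a \<Rightarrow> 'a \<Rightarrow> bool" where
  "compl_graph E u v \<longleftrightarrow> u \<noteq> v \<and> \<not> E u v"

definition split_graph :: "'a set \<Rightarrow> ('a \<Rightarrow> 'a \<Rightarrow> bool) \<Rightarrow> bool" where
  "split_graph V E \<longleftrightarrow> simple_graph V E \<and>
     (\<exists>C I. C \<union> I = V \<and> C \<inter> I = {} \<and>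
            (\<forall>x\<in>C. \<forall>y\<in>C. x \<noteq> y \<longrightarrow> E x y) \<and>
            (\<forall>x\<in>I. \<forall>y\<in>I. \<not> E x y))"

definition k_sparse :: "'a set \<Rightarrow> ('a \<Rightarrow> 'a \<Rightarrow> bool) \<Rightarrow> nat \<Rightarrow> 'a set \<Rightarrow> bool" where
  "k_sparse V E k S \<longleftrightarrow> S \<subseteq> V \<and> (\<forall>v\<in>S. card {u\<in>S. E v u} \<le> k)"

definition k_dense :: "'a set \<Rightarrow> ('a \<Rightarrow> 'a \<Rightarrow> bool) \<Rightarrow> nat \<Rightarrow> 'a set \<Rightarrow> bool" where
  "k_dense V E k S \<longleftrightarrow> k_sparse V (compl_graph E) k S"

text \<open>R_k^G(i,j) for a graph class given as a predicate; graphs on n vertices are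
  represented with vertex set {..<n}.\<close>
definition ramsey_k :: "(nat set \<Rightarrow> (nat \<Rightarrow> nat \<Rightarrow> bool) \<Rightarrow> bool) \<Rightarrow> nat \<Rightarrow> nat \<Rightarrow> nat \<Rightarrow> nat" where
  "ramsey_k cls k i j = (LEAST n. \<forall>E. simple_graph {..<n} E \<and> cls {..<n} E \<longrightarrow>
      (\<exists>S. card S = i \<and> k_dense {..<n} E k S) \<or> (\<exists>S. card S = j \<and> k_sparse {..<n} E k S))"

end

theory Submission
  imports Defs
begin

lemma upper:
  fixes k i j :: nat
  assumes "i \<ge> 1" "j \<ge> 1"
  shows "\<forall>E. simple_graph {..<i+j-1} E \<and> split_graph {..<i+j-1} E \<longrightarrow>
      (\<exists>S. card S = i \<and> k_dense {..<i+j-1} E k S) \<or> (\<exists>S. card S = j \<and> k_sparse {..<i+j-1} E k S)"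
proof (intro allI impI)
  fix E assume "simple_graph {..<i+j-1} E \<and> split_graph {..<i+j-1} E"
  then obtain C I where CI: "C \<union> I = {..<i+j-1}" "C \<inter> I = {}"
    "\<forall>x\<in>C. \<forall>y\<in>C. x \<noteq> y \<longrightarrow> E x y" "\<forall>x\<in>I. \<forall>y\<in>I. \<not> E x y"
    unfolding split_graph_def by blast
  have fin: "finite C" "finite I" using CI(1) by (metis finite_Un finite_lessThan)+
  have "card C + card I = i + j - 1"
    using card_Un_disjoint[OF fin CI(2)] CI(1) by simp
  hence "card C \<ge> i \<or> card I \<ge> j" by arith
  thus "(\<exists>S. card S = i \<and> k_dense {..<i+j-1} E k S) \<or> (\<exists>S. card S = j \<and> k_sparse {..<i+j-1} E k S)"
  proof
    assume "card C \<ge> i"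
    then obtain S where S: "S \<subseteq> C" "card S = i" by (meson obtain_subset_with_card_n)
    have "\<forall>v\<in>S. {u\<in>S. compl_graph E v u} = {}"
      using S CI(3) unfolding compl_graph_def by blast
    hence "k_dense {..<i+j-1} E k S" unfolding k_dense_def k_sparse_def using S CI(1) by (metis (no_types, lifting) Un_upper1 card.empty le0 subset_trans)
    thus ?thesis using S by blast
  next
    assume "card I \<ge> j"
    then obtain S where S: "S \<subseteq> I" "card S = j" by (meson obtain_subset_with_card_n)
    have "\<forall>v\<in>S. {u\<in>S. E v u} = {}"
      using S CI(4) by blast
    hence "k_sparse {..<i+j-1} E k S" unfolding k_sparse_def using S CI(1) by (metis (no_types, lifting) Un_upper2 card.empty le0 subset_trans)
    thus ?thesis using S by blast
  qed
qed

definition ff :: "nat \<Rightarrow> nat \<Rightarrow> nat \<Rightarrow> bool" where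
  "ff a p x \<longleftrightarrow> x < p \<or> (a \<le> x \<and> x < a + p)"

definition EE :: "nat \<Rightarrow> nat \<Rightarrow> nat \<Rightarrow> nat \<Rightarrow> bool" where
  "EE a p x y \<longleftrightarrow> x \<noteq> y \<and> ((x < a \<and> y < a) \<or> ((x < a) \<noteq> (y < a) \<and> ff a p x = ff a p y))"

lemma lower:
  fixes k i j n :: nat
  assumes "i \<ge> 2 * k + 3" and "j \<ge> 2 * k + 3" and "n < i + j - 1"
  shows "\<not> (\<forall>E. simple_graph {..<n} E \<and> split_graph {..<n} E \<longrightarrow>
      (\<exists>S. card S = i \<and> k_dense {..<n} E k S) \<or> (\<exists>S. card S = j \<and> k_sparse {..<n} E k S))"
proof -
  define a where "a = i - 1"
  define b where "b = j - 1"
  define p where "p = k + 1"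
  define E where "E = EE a p"
  have sg: "simple_graph {..<n} E" unfolding simple_graph_def E_def EE_def by auto
  have spl: "split_graph {..<n} E" unfolding split_graph_def
    apply (rule conjI[OF sg])
    apply (rule exI[of _ "{..<n} \<inter> {..<a}"], rule exI[of _ "{..<n} \<inter> {a..}"])
    by (auto simp: E_def EE_def)
  have nd: "\<not> k_dense {..<n} E k S" if "card S = i" for S
  proof
    assume d: "k_dense {..<n} E k S"
    hence Ssub: "S \<subseteq> {..<n}" unfolding k_dense_def k_sparse_def by auto
    have "\<exists>v\<in>S. v \<ge> a"
    proof (rule ccontr)
      assume "\<not> ?thesis"
      hence "S \<subseteq> {..<a}" by auto
      hence "card S \<le> card {..<a}" by (intro card_mono) auto
      hence "card S \<le> a" by simp
      thus False using that assms unfolding a_def by auto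
    qed
    then obtain v where v: "v \<in> S" "v \<ge> a" by blast
    define N where "N = {u. u < a \<and> ff a p u = ff a p v}"
    have cN: "card N \<le> a - p"
    proof (cases "ff a p v")
      case True
      hence "N = {..<p}" unfolding N_def p_def a_def ff_def using assms by auto
      thus ?thesis using assms unfolding p_def a_def by simp
    next
      case False
      hence "N = {p..<a}" unfolding N_def ff_def using v by auto
      thus ?thesis by simp
    qed
    have finN: "finite N" unfolding N_def by auto
    have sub: "S - {v} - N \<subseteq> {u\<in>S. compl_graph E v u}"
      using v unfolding N_def compl_graph_def E_def EE_def by auto
    have finS: "finite S" using Ssub finite_subset by blast
    have "card (S - {v}) - card N \<le> card (S - {v} - N)" by (rule diff_card_le_card_Diff[OF finN])
    also have "\<dots> \<le> card {u\<in>S. compl_graph E v u}" using sub finS by (intro card_mono) auto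
    finally have "card {u\<in>S. compl_graph E v u} \<ge> i - 1 - (a - p)"
      using cN v that finS by simp
    moreover have "card {u\<in>S. compl_graph E v u} \<le> k"
      using d v unfolding k_dense_def k_sparse_def by auto
    ultimately show False using assms unfolding a_def p_def by simp
  qed
  have ns: "\<not> k_sparse {..<n} E k S" if "card S = j" for S
  proof
    assume d: "k_sparse {..<n} E k S"
    hence Ssub: "S \<subseteq> {..<n}" unfolding k_sparse_def by auto
    have "\<exists>v\<in>S. v < a"
    proof (rule ccontr)
      assume "\<not> ?thesis"
      hence "S \<subseteq> {a..<n}" using Ssub by (simp add: subset_iff not_less)
      hence "card S \<le> card {a..<n}" by (intro card_mono) auto
      hence "card S \<le> n - a" by simp
      thus False using that assms unfolding a_def by auto
    qed
    then obtain v where v: "v \<in> S" "v < a" by blast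
    define N where "N = {u. a \<le> u \<and> u < a + b \<and> ff a p u \<noteq> ff a p v}"
    have cN: "card N \<le> b - p"
    proof (cases "ff a p v")
      case True
      hence "N = {a+p..<a+b}" unfolding N_def ff_def using v by auto
      thus ?thesis by simp
    next
      case False
      hence "N = {a..<a+p}" unfolding N_def p_def b_def ff_def using v assms by auto
      thus ?thesis using assms unfolding p_def b_def by simp
    qed
    have finN: "finite N" unfolding N_def by auto
    have sub: "S - {v} - N \<subseteq> {u\<in>S. E v u}"
      using v Ssub assms unfolding N_def E_def EE_def a_def b_def by auto
    have finS: "finite S" using Ssub finite_subset by blast
    have "card (S - {v}) - card N \<le> card (S - {v} - N)" by (rule diff_card_le_card_Diff[OF finN])
    also have "\<dots> \<le> card {u\<in>S. E v u}" using sub finS by (intro card_mono) auto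
    finally have "card {u\<in>S. E v u} \<ge> j - 1 - (b - p)"
      using cN v that finS by simp
    moreover have "card {u\<in>S. E v u} \<le> k"
      using d v unfolding k_sparse_def by auto
    ultimately show False using assms unfolding b_def p_def by simp
  qed
  show ?thesis using sg spl nd ns by blast
qed

theorem corollary6p1:
  fixes k i j :: nat
  assumes "i \<ge> 2 * k + 3" and "j \<ge> 2 * k + 3"
  shows "ramsey_k split_graph k i j = i + j - 1"
  unfolding ramsey_k_def
proof (rule Least_equality)
  show "\<forall>E. simple_graph {..<i+j-1} E \<and> split_graph {..<i+j-1} E \<longrightarrow>
      (\<exists>S. card S = i \<and> k_dense {..<i+j-1} E k S) \<or> (\<exists>S. card S = j \<and> k_sparse {..<i+j-1} E k S)"
    using upper assms by simp
next
  fix y :: nat assume "\<forall>E. simple_graph {..<y} E \<and> split_graph {..<y} E \<longrightarrow>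
      (\<exists>S. card S = i \<and> k_dense {..<y} E k S) \<or> (\<exists>S. card S = j \<and> k_sparse {..<y} E k S)"
  thus "i + j - 1 \<le> y" using lower[OF assms, of y] by (meson not_le)
qed

end
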